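(* Let $(F_X,F_Y,F_Z)$ be distribution functions, $F=F_XF_Z$, $G=F_YF_Z$, $K=F_Y+F_Z-F_YF_Z$. Let $\mathbf\Phi$, $\mathbf\Psi$, $\mathbf X$ be nonempty sets of functions $[0,1]\to[0,1]$ such that every triple $(\phi,\psi,\chi)\in\mathbf\Phi\times\mathbf\Psi\times\mathbf X$ is associated to $(F_X,F_Y,F_Z)$. Let $\phi_{\min}=\inf\mathbf\Phi$, $\phi_{\max}=\sup\mathbf\Phi$, $\psi_{\min}=\inf\mathbf\Psi$, $\psi_{\max}=\sup\mathbf\Psi$, $\chi_{\min}=\inf\mathbf X$, $\chi_{\max}=\sup\mathbf X$ (pointwise). Then every triple $(\phi,\psi,\chi)$ with $\phi\in\mathbf\Phi\cup\{\phi_{\min},\phi_{\max}\}$, $\psi\in\mathbf\Psi\cup\{\psi_{\min},\psi_{\max}\}$, $\chi\in\mathbf X\cup\{\chi_{\min},\chi_{\max}\}$ is associated to $(F_X,F_Y,F_Z)$.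
   Context: Distribution functions are non-decreasing maps $\mathbb R\to[0,1]$. A triple $(\phi,\psi,\chi)$ of functions $[0,1]\to[0,1]$ is associated to $(F_X,F_Y,F_Z)$ if: $\phi(F(x))=F_X(x)$ whenever $F(x)>0$, $\psi(G(y))=F_Y(y)$ whenever $G(y)>0$, $\chi(K(y))=F_Y(y)$ whenever $K(y)<1$; $\phi$ and $\psi$ are non-decreasing with $\phi(0)=\psi(0)=0$, $\phi(1)=\psi(1)=1$, and $\phi(u)/u$, $\psi(v)/v$ non-increasing on $(0,1]$; and $\chi$ is non-decreasing with $\chi(0)=0$, $\chi(1)=1$, and $\chi_*(w)=\frac{1-\chi(w)}{w-\chi(w)}$ (values in $[1,\infty]$) non-increasing on $[0,1]$. *)

theory Defs
  imports "HOL-Analysis.Analysis"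
begin

definition distribution_function :: "(real \<Rightarrow> real) \<Rightarrow> bool" where
  "distribution_function F \<longleftrightarrow> mono F \<and> (\<forall>x. 0 \<le> F x \<and> F x \<le> 1)"

definition unit_map :: "(real \<Rightarrow> real) \<Rightarrow> bool" where
  "unit_map f \<longleftrightarrow> (\<forall>u\<in>{0..1}. 0 \<le> f u \<and> f u \<le> 1)"

text \<open>chi_*(w) = (1 - chi w)/(w - chi w) as an extended real; a zero denominator gives infinity,
  except at w = 1 where the expression is 0/0 and the value is set to 1.\<close>
definition chi_star :: "(real \<Rightarrow> real) \<Rightarrow> real \<Rightarrow> ereal" where
  "chi_star ch w = (if w = 1 then 1 else if w - ch w = 0 then \<infinity>
                   else ereal ((1 - ch w) / (w - ch w)))"

definition associated ::
  "(real \<Rightarrow> real) \<Rightarrow> (real \<Rightarrow> real) \<Rightarrow> (real \<Rightarrow> real) \<Rightarrow>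
   (real \<Rightarrow> real) \<Rightarrow> (real \<Rightarrow> real) \<Rightarrow> (real \<Rightarrow> real) \<Rightarrow> bool" where
  "associated \<phi> \<psi> ch FX FY FZ \<longleftrightarrow>
     (let F = (\<lambda>x. FX x * FZ x); G = (\<lambda>y. FY y * FZ y); K = (\<lambda>y. FY y + FZ y - FY y * FZ y) in
     unit_map \<phi> \<and> unit_map \<psi> \<and> unit_map ch \<and>
     (\<forall>x. F x > 0 \<longrightarrow> \<phi> (F x) = FX x) \<and>
     (\<forall>y. G y > 0 \<longrightarrow> \<psi> (G y) = FY y) \<and>
     (\<forall>y. K y < 1 \<longrightarrow> ch (K y) = FY y) \<and>
     mono_on {0..1} \<phi> \<and> \<phi> 0 = 0 \<and> \<phi> 1 = 1 \<and>
     antimono_on {0<..1} (\<lambda>u. \<phi> u / u) \<and>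
     mono_on {0..1} \<psi> \<and> \<psi> 0 = 0 \<and> \<psi> 1 = 1 \<and>
     antimono_on {0<..1} (\<lambda>v. \<psi> v / v) \<and>
     mono_on {0..1} ch \<and> ch 0 = 0 \<and> ch 1 = 1 \<and>
     (\<forall>w\<in>{0..1}. 1 \<le> chi_star ch w) \<and>
     antimono_on {0..1} (chi_star ch))"

end

theory Submission
  imports Defs
begin

definition P1 :: "(real \<Rightarrow> real) \<Rightarrow> (real \<Rightarrow> real) \<Rightarrow> (real \<Rightarrow> real) \<Rightarrow> bool" where
  "P1 \<phi> F FX \<longleftrightarrow> unit_map \<phi> \<and> (\<forall>x. F x > 0 \<longrightarrow> \<phi> (F x) = FX x) \<and>
     mono_on {0..1} \<phi> \<and> \<phi> 0 = 0 \<and> \<phi> 1 = 1 \<and> antimono_on {0<..1} (\<lambda>u. \<phi> u / u)"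

definition Q3 :: "(real \<Rightarrow> real) \<Rightarrow> (real \<Rightarrow> real) \<Rightarrow> (real \<Rightarrow> real) \<Rightarrow> bool" where
  "Q3 ch K FY \<longleftrightarrow> unit_map ch \<and> (\<forall>y. K y < 1 \<longrightarrow> ch (K y) = FY y) \<and>
     mono_on {0..1} ch \<and> ch 0 = 0 \<and> ch 1 = 1 \<and> (\<forall>w\<in>{0..<1}. ch w \<le> w) \<and>
     (\<forall>w1 w2. 0 \<le> w1 \<longrightarrow> w1 \<le> w2 \<longrightarrow> w2 < 1 \<longrightarrow> (1 - ch w1) * (1 - w2) \<le> (1 - ch w2) * (1 - w1))"

lemma star_ge1_iff:
  assumes "unit_map ch" "w \<in> {0..<1}"
  shows "1 \<le> chi_star ch w \<longleftrightarrow> ch w \<le> w"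
proof -
  have c: "0 \<le> ch w" "ch w \<le> 1" using assms unfolding unit_map_def by auto
  show ?thesis
  proof (cases "w - ch w = 0")
    case True then show ?thesis using assms by (simp add: chi_star_def)
  next
    case False
    then have "chi_star ch w = ereal ((1 - ch w) / (w - ch w))" using assms by (simp add: chi_star_def)
    moreover have "1 \<le> (1 - ch w) / (w - ch w) \<longleftrightarrow> ch w \<le> w"
    proof
      assume "1 \<le> (1 - ch w) / (w - ch w)"
      then show "ch w \<le> w" using c False
        by (smt (verit, ccfv_SIG) divide_nonneg_neg)
    next
      assume "ch w \<le> w"
      then have "w - ch w > 0" using False by auto
      then show "1 \<le> (1 - ch w) / (w - ch w)" using assms by (simp add: le_divide_eq)
    qed
    ultimately show ?thesis by simp
  qed
qed

lemma chi_char: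
  assumes um: "unit_map ch" and c1: "ch 1 = 1"
  shows "((\<forall>w\<in>{0..1}. 1 \<le> chi_star ch w) \<and> antimono_on {0..1} (chi_star ch)) \<longleftrightarrow>
         ((\<forall>w\<in>{0..<1}. ch w \<le> w) \<and>
          (\<forall>w1 w2. 0 \<le> w1 \<longrightarrow> w1 \<le> w2 \<longrightarrow> w2 < 1 \<longrightarrow> (1 - ch w1) * (1 - w2) \<le> (1 - ch w2) * (1 - w1)))"
  (is "?L \<longleftrightarrow> ?R")
proof
  assume L: ?L
  have le: "\<forall>w\<in>{0..<1}. ch w \<le> w" using L star_ge1_iff[OF um] by auto
  moreover have "(1 - ch w1) * (1 - w2) \<le> (1 - ch w2) * (1 - w1)"
    if w: "0 \<le> w1" "w1 \<le> w2" "w2 < 1" for w1 w2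
  proof -
    have am: "chi_star ch w2 \<le> chi_star ch w1"
      using L w unfolding monotone_on_def by auto
    have l1: "ch w1 \<le> w1" and l2: "ch w2 \<le> w2" using le w by auto
    have p1: "0 \<le> ch w1" "0 \<le> ch w2" using um w unfolding unit_map_def by auto
    show ?thesis
    proof (cases "ch w2 = w2")
      case True
      then have "chi_star ch w2 = \<infinity>" using w by (simp add: chi_star_def)
      with am have "chi_star ch w1 = \<infinity>" by simp
      then have "ch w1 = w1" using w by (auto simp: chi_star_def split: if_splits)
      then show ?thesis using True by simp
    next
      case False
      show ?thesis
      proof (cases "ch w1 = w1")
        case True
        then show ?thesis using l2 w by (simp add: mult_left_mono)
      next
        case F1: False
        have d1: "w1 - ch w1 > 0" and d2: "w2 - ch w2 > 0" using l1 l2 F1 False by auto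
        have "chi_star ch w1 = ereal ((1 - ch w1) / (w1 - ch w1))"
             "chi_star ch w2 = ereal ((1 - ch w2) / (w2 - ch w2))"
          using w d1 d2 by (auto simp: chi_star_def)
        with am have "(1 - ch w2) / (w2 - ch w2) \<le> (1 - ch w1) / (w1 - ch w1)" by simp
        then have "(1 - ch w2) * (w1 - ch w1) \<le> (1 - ch w1) * (w2 - ch w2)"
          using d1 d2 by (simp add: divide_simps)
        then show ?thesis by (simp add: algebra_simps)
      qed
    qed
  qed
  ultimately show ?R by blast
next
  assume R: ?R
  have ge1: "\<forall>w\<in>{0..1}. 1 \<le> chi_star ch w"
  proof
    fix w :: real assume "w \<in> {0..1}"
    then show "1 \<le> chi_star ch w"
      using R star_ge1_iff[OF um, of w] by (cases "w = 1") (auto simp: chi_star_def)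
  qed
  moreover have "antimono_on {0..1} (chi_star ch)"
    unfolding monotone_on_def
  proof (intro ballI impI)
    fix w1 w2 :: real assume w: "w1 \<in> {0..1}" "w2 \<in> {0..1}" "w1 \<le> w2"
    show "chi_star ch w2 \<le> chi_star ch w1"
    proof (cases "w2 = 1")
      case True then show ?thesis using ge1 w by (simp add: chi_star_def)
    next
      case F2: False
      then have w2: "w2 < 1" using w by auto
      have ineq: "(1 - ch w1) * (1 - w2) \<le> (1 - ch w2) * (1 - w1)" using R w w2 by auto
      have l1: "ch w1 \<le> w1" and l2: "ch w2 \<le> w2" using R w w2 by auto
      show ?thesis
      proof (cases "ch w1 = w1")
        case True
        then have "chi_star ch w1 = \<infinity>" using w w2 by (simp add: chi_star_def)
        then show ?thesis by simp
      next
        case F1: False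
        show ?thesis
        proof (cases "ch w2 = w2")
          case True
          then have "(1 - ch w1) * (1 - w2) \<le> (1 - w2) * (1 - w1)" using ineq by simp
          then have "1 - ch w1 \<le> 1 - w1" using w2 by (simp add: mult.commute)
          then show ?thesis using l1 F1 by simp
        next
          case False
          have d1: "w1 - ch w1 > 0" and d2: "w2 - ch w2 > 0" using l1 l2 F1 False by auto
          have e: "chi_star ch w1 = ereal ((1 - ch w1) / (w1 - ch w1))"
               "chi_star ch w2 = ereal ((1 - ch w2) / (w2 - ch w2))"
            using w w2 d1 d2 by (auto simp: chi_star_def)
          have "(1 - ch w2) * (w1 - ch w1) \<le> (1 - ch w1) * (w2 - ch w2)"
            using ineq by (simp add: algebra_simps)
          then have "(1 - ch w2) / (w2 - ch w2) \<le> (1 - ch w1) / (w1 - ch w1)"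
            using d1 d2 by (simp add: divide_simps)
          then show ?thesis using e by simp
        qed
      qed
    qed
  qed
  ultimately show ?L by blast
qed

lemma assoc_iff:
  "associated \<phi> \<psi> ch FX FY FZ \<longleftrightarrow>
     P1 \<phi> (\<lambda>x. FX x * FZ x) FX \<and> P1 \<psi> (\<lambda>y. FY y * FZ y) FY \<and>
     Q3 ch (\<lambda>y. FY y + FZ y - FY y * FZ y) FY"
  unfolding associated_def P1_def Q3_def Let_def
  using chi_char[of ch] by blast

lemma P1_inf_sup:
  assumes ne: "S \<noteq> {}" and all: "\<forall>f\<in>S. P1 f F FX"
  shows "P1 (\<lambda>u. INF f\<in>S. f u) F FX" "P1 (\<lambda>u. SUP f\<in>S. f u) F FX"
proof -
  have b: "0 \<le> f u" "f u \<le> 1" if "f \<in> S" "u \<in> {0..1}" for f u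
    using all that unfolding P1_def unit_map_def by auto
  have bb: "bdd_below ((\<lambda>f. f u) ` S)" "bdd_above ((\<lambda>f. f u) ` S)" if "u \<in> {0..1}" for u
    using b that by (auto intro!: bdd_belowI bdd_aboveI)
  have const: "(\<lambda>f. f u) ` S = {c}" if "\<forall>f\<in>S. f u = c" for u c
    using ne that by auto
  define m where "m u = (INF f\<in>S. f u)" for u
  define M where "M u = (SUP f\<in>S. f u)" for u
  have mle: "m u \<le> f u" if "f \<in> S" "u \<in> {0..1}" for f u
    unfolding m_def using bb that by (intro cINF_lower) auto
  have mge: "c \<le> m u" if "\<And>f. f \<in> S \<Longrightarrow> c \<le> f u" for c u
    unfolding m_def using ne that by (intro cINF_greatest) auto
  have Mge: "f u \<le> M u" if "f \<in> S" "u \<in> {0..1}" for f u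
    unfolding M_def using bb that by (intro cSUP_upper) auto
  have Mle: "M u \<le> c" if "\<And>f. f \<in> S \<Longrightarrow> f u \<le> c" for c u
    unfolding M_def using ne that by (intro cSUP_least) auto
  obtain f0 where f0: "f0 \<in> S" using ne by auto
  have eqs: "(\<lambda>f. f (F x)) ` S = {FX x}" if "F x > 0" for x
    using all that by (intro const) (auto simp: P1_def)
  have e0: "(\<lambda>f. f 0) ` S = {0}" and e1: "(\<lambda>f. f 1) ` S = {1}"
    using all by (auto intro!: const simp: P1_def)
  have "P1 m F FX"
    unfolding P1_def
  proof (intro conjI)
    show "unit_map m" unfolding unit_map_def
    proof
      fix u :: real assume u: "u \<in> {0..1}"
      show "0 \<le> m u \<and> m u \<le> 1"
        using mge[of 0 u] b[OF _ u] mle[OF f0 u] b[OF f0 u] by fastforce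
    qed
    show "\<forall>x. 0 < F x \<longrightarrow> m (F x) = FX x" using eqs by (simp add: m_def)
    show "m 0 = 0" "m 1 = 1" using e0 e1 by (simp_all add: m_def)
    show "mono_on {0..1} m" unfolding monotone_on_def
    proof (intro ballI impI)
      fix u v :: real assume uv: "u \<in> {0..1}" "v \<in> {0..1}" "u \<le> v"
      show "m u \<le> m v"
      proof (rule mge)
        fix f assume f: "f \<in> S"
        have "mono_on {0..1} f" using all f by (simp add: P1_def)
        then have "f u \<le> f v" using uv by (simp add: monotone_on_def)
        then show "m u \<le> f v" using mle[OF f uv(1)] by simp
      qed
    qed
    show "antimono_on {0<..1} (\<lambda>u. m u / u)" unfolding monotone_on_def
    proof (intro ballI impI)
      fix u v :: real assume uv: "u \<in> {0<..1}" "v \<in> {0<..1}" "u \<le> v"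
      have "m v / v * u \<le> m u"
      proof (rule mge)
        fix f assume f: "f \<in> S"
        have "antimono_on {0<..1} (\<lambda>u. f u / u)" using all f by (simp add: P1_def)
        then have "f v / v \<le> f u / u" using uv by (simp add: monotone_on_def)
        moreover have "m v / v \<le> f v / v" using mle[OF f, of v] uv by (simp add: divide_right_mono)
        ultimately have "m v / v \<le> f u / u" by simp
        then show "m v / v * u \<le> f u" using uv by (simp add: le_divide_eq)
      qed
      then show "m v / v \<le> m u / u" using uv by (simp add: le_divide_eq)
    qed
  qed
  then show "P1 (\<lambda>u. INF f\<in>S. f u) F FX" by (simp add: m_def[abs_def])
  have "P1 M F FX"
    unfolding P1_def
  proof (intro conjI)
    show "unit_map M" unfolding unit_map_def
    proof
      fix u :: real assume u: "u \<in> {0..1}"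
      show "0 \<le> M u \<and> M u \<le> 1"
        using Mle[of u 1] b[OF _ u] Mge[OF f0 u] b[OF f0 u] by fastforce
    qed
    show "\<forall>x. 0 < F x \<longrightarrow> M (F x) = FX x" using eqs by (simp add: M_def)
    show "M 0 = 0" "M 1 = 1" using e0 e1 by (simp_all add: M_def)
    show "mono_on {0..1} M" unfolding monotone_on_def
    proof (intro ballI impI)
      fix u v :: real assume uv: "u \<in> {0..1}" "v \<in> {0..1}" "u \<le> v"
      show "M u \<le> M v"
      proof (rule Mle)
        fix f assume f: "f \<in> S"
        have "mono_on {0..1} f" using all f by (simp add: P1_def)
        then have "f u \<le> f v" using uv by (simp add: monotone_on_def)
        then show "f u \<le> M v" using Mge[OF f uv(2)] by simp
      qed
    qed
    show "antimono_on {0<..1} (\<lambda>u. M u / u)" unfolding monotone_on_def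
    proof (intro ballI impI)
      fix u v :: real assume uv: "u \<in> {0<..1}" "v \<in> {0<..1}" "u \<le> v"
      have "M v \<le> M u / u * v"
      proof (rule Mle)
        fix f assume f: "f \<in> S"
        have "antimono_on {0<..1} (\<lambda>u. f u / u)" using all f by (simp add: P1_def)
        then have "f v / v \<le> f u / u" using uv by (simp add: monotone_on_def)
        moreover have "f u / u \<le> M u / u" using Mge[OF f, of u] uv by (simp add: divide_right_mono)
        ultimately have "f v / v \<le> M u / u" by simp
        then show "f v \<le> M u / u * v" using uv by (simp add: divide_le_eq)
      qed
      then show "M v / v \<le> M u / u" using uv by (simp add: divide_le_eq)
    qed
  qed
  then show "P1 (\<lambda>u. SUP f\<in>S. f u) F FX" by (simp add: M_def[abs_def])
qed

lemma Q3_inf_sup: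
  assumes ne: "S \<noteq> {}" and all: "\<forall>f\<in>S. Q3 f K FY"
  shows "Q3 (\<lambda>u. INF f\<in>S. f u) K FY" "Q3 (\<lambda>u. SUP f\<in>S. f u) K FY"
proof -
  have b: "0 \<le> f u" "f u \<le> 1" if "f \<in> S" "u \<in> {0..1}" for f u
    using all that unfolding Q3_def unit_map_def by auto
  have bb: "bdd_below ((\<lambda>f. f u) ` S)" "bdd_above ((\<lambda>f. f u) ` S)" if "u \<in> {0..1}" for u
    using b that by (auto intro!: bdd_belowI bdd_aboveI)
  have const: "(\<lambda>f. f u) ` S = {c}" if "\<forall>f\<in>S. f u = c" for u c
    using ne that by auto
  define m where "m u = (INF f\<in>S. f u)" for u
  define M where "M u = (SUP f\<in>S. f u)" for u
  have mle: "m u \<le> f u" if "f \<in> S" "u \<in> {0..1}" for f u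
    unfolding m_def using bb that by (intro cINF_lower) auto
  have mge: "c \<le> m u" if "\<And>f. f \<in> S \<Longrightarrow> c \<le> f u" for c u
    unfolding m_def using ne that by (intro cINF_greatest) auto
  have Mge: "f u \<le> M u" if "f \<in> S" "u \<in> {0..1}" for f u
    unfolding M_def using bb that by (intro cSUP_upper) auto
  have Mle: "M u \<le> c" if "\<And>f. f \<in> S \<Longrightarrow> f u \<le> c" for c u
    unfolding M_def using ne that by (intro cSUP_least) auto
  obtain f0 where f0: "f0 \<in> S" using ne by auto
  have eqs: "(\<lambda>f. f (K x)) ` S = {FY x}" if "K x < 1" for x
    using all that by (intro const) (auto simp: Q3_def)
  have e0: "(\<lambda>f. f 0) ` S = {0}" and e1: "(\<lambda>f. f 1) ` S = {1}"
    using all by (auto intro!: const simp: Q3_def)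
  have ineqf: "(1 - f w1) * (1 - w2) \<le> (1 - f w2) * (1 - w1)"
    if "f \<in> S" "0 \<le> w1" "w1 \<le> w2" "w2 < 1" for f w1 w2
    using all that unfolding Q3_def by blast
  have lef: "f w \<le> w" if "f \<in> S" "w \<in> {0..<1}" for f w
    using all that unfolding Q3_def by blast
  have monof: "f u \<le> f v" if "f \<in> S" "u \<in> {0..1}" "v \<in> {0..1}" "u \<le> v" for f u v
    using all that unfolding Q3_def monotone_on_def by blast
  have "Q3 m K FY"
    unfolding Q3_def
  proof (intro conjI)
    show "unit_map m" unfolding unit_map_def
    proof
      fix u :: real assume u: "u \<in> {0..1}"
      show "0 \<le> m u \<and> m u \<le> 1"
        using mge[of 0 u] b[OF _ u] mle[OF f0 u] b[OF f0 u] by fastforce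
    qed
    show "\<forall>x. K x < 1 \<longrightarrow> m (K x) = FY x" using eqs by (simp add: m_def)
    show "m 0 = 0" "m 1 = 1" using e0 e1 by (simp_all add: m_def)
    show "mono_on {0..1} m" unfolding monotone_on_def
    proof (intro ballI impI)
      fix u v :: real assume uv: "u \<in> {0..1}" "v \<in> {0..1}" "u \<le> v"
      show "m u \<le> m v"
      proof (rule mge)
        fix f assume f: "f \<in> S"
        show "m u \<le> f v" using mle[OF f uv(1)] monof[OF f uv] by simp
      qed
    qed
    show "\<forall>w\<in>{0..<1}. m w \<le> w"
      using mle[OF f0] lef[OF f0] by force
    show "\<forall>w1 w2. 0 \<le> w1 \<longrightarrow> w1 \<le> w2 \<longrightarrow> w2 < 1 \<longrightarrow> (1 - m w1) * (1 - w2) \<le> (1 - m w2) * (1 - w1)"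
    proof (intro allI impI)
      fix w1 w2 :: real assume w: "0 \<le> w1" "w1 \<le> w2" "w2 < 1"
      have "1 - (1 - m w2) * (1 - w1) / (1 - w2) \<le> m w1"
      proof (rule mge)
        fix f assume f: "f \<in> S"
        have "m w2 \<le> f w2" using mle[OF f, of w2] w by simp
        then have "(1 - f w2) * (1 - w1) \<le> (1 - m w2) * (1 - w1)" using w by (simp add: mult_right_mono)
        with ineqf[OF f w] have "(1 - f w1) * (1 - w2) \<le> (1 - m w2) * (1 - w1)" by simp
        then have "1 - f w1 \<le> (1 - m w2) * (1 - w1) / (1 - w2)" using w by (simp add: le_divide_eq)
        then show "1 - (1 - m w2) * (1 - w1) / (1 - w2) \<le> f w1" by simp
      qed
      then have "1 - m w1 \<le> (1 - m w2) * (1 - w1) / (1 - w2)" by simp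
      then show "(1 - m w1) * (1 - w2) \<le> (1 - m w2) * (1 - w1)" using w by (simp add: le_divide_eq)
    qed
  qed
  then show "Q3 (\<lambda>u. INF f\<in>S. f u) K FY" by (simp add: m_def[abs_def])
  have "Q3 M K FY"
    unfolding Q3_def
  proof (intro conjI)
    show "unit_map M" unfolding unit_map_def
    proof
      fix u :: real assume u: "u \<in> {0..1}"
      show "0 \<le> M u \<and> M u \<le> 1"
        using Mle[of u 1] b[OF _ u] Mge[OF f0 u] b[OF f0 u] by fastforce
    qed
    show "\<forall>x. K x < 1 \<longrightarrow> M (K x) = FY x" using eqs by (simp add: M_def)
    show "M 0 = 0" "M 1 = 1" using e0 e1 by (simp_all add: M_def)
    show "mono_on {0..1} M" unfolding monotone_on_def
    proof (intro ballI impI)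
      fix u v :: real assume uv: "u \<in> {0..1}" "v \<in> {0..1}" "u \<le> v"
      show "M u \<le> M v"
      proof (rule Mle)
        fix f assume f: "f \<in> S"
        show "f u \<le> M v" using Mge[OF f uv(2)] monof[OF f uv] by simp
      qed
    qed
    show "\<forall>w\<in>{0..<1}. M w \<le> w"
    proof
      fix w :: real assume "w \<in> {0..<1}"
      then show "M w \<le> w" using Mle[of w w] lef by auto
    qed
    show "\<forall>w1 w2. 0 \<le> w1 \<longrightarrow> w1 \<le> w2 \<longrightarrow> w2 < 1 \<longrightarrow> (1 - M w1) * (1 - w2) \<le> (1 - M w2) * (1 - w1)"
    proof (intro allI impI)
      fix w1 w2 :: real assume w: "0 \<le> w1" "w1 \<le> w2" "w2 < 1"
      have "M w2 \<le> 1 - (1 - M w1) * (1 - w2) / (1 - w1)"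
      proof (rule Mle)
        fix f assume f: "f \<in> S"
        have "f w1 \<le> M w1" using Mge[OF f, of w1] w by simp
        then have "(1 - M w1) * (1 - w2) \<le> (1 - f w1) * (1 - w2)" using w by (simp add: mult_right_mono)
        with ineqf[OF f w] have "(1 - M w1) * (1 - w2) \<le> (1 - f w2) * (1 - w1)" by simp
        then have "(1 - M w1) * (1 - w2) / (1 - w1) \<le> 1 - f w2" using w by (simp add: divide_le_eq)
        then show "f w2 \<le> 1 - (1 - M w1) * (1 - w2) / (1 - w1)" by simp
      qed
      then have "(1 - M w1) * (1 - w2) / (1 - w1) \<le> 1 - M w2" by simp
      then show "(1 - M w1) * (1 - w2) \<le> (1 - M w2) * (1 - w1)" using w by (simp add: divide_le_eq)
    qed
  qed
  then show "Q3 (\<lambda>u. SUP f\<in>S. f u) K FY" by (simp add: M_def[abs_def])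
qed

theorem proposition4:
  fixes FX FY FZ :: "real \<Rightarrow> real"
    and Phi Psi Chi :: "(real \<Rightarrow> real) set"
  assumes "distribution_function FX" "distribution_function FY" "distribution_function FZ"
    and "Phi \<noteq> {}" "Psi \<noteq> {}" "Chi \<noteq> {}"
    and "\<forall>\<phi>\<in>Phi. \<forall>\<psi>\<in>Psi. \<forall>ch\<in>Chi. associated \<phi> \<psi> ch FX FY FZ"
  shows "\<forall>\<phi>\<in>Phi \<union> {(\<lambda>u. INF f\<in>Phi. f u), (\<lambda>u. SUP f\<in>Phi. f u)}.
         \<forall>\<psi>\<in>Psi \<union> {(\<lambda>v. INF f\<in>Psi. f v), (\<lambda>v. SUP f\<in>Psi. f v)}.
         \<forall>ch\<in>Chi \<union> {(\<lambda>w. INF f\<in>Chi. f w), (\<lambda>w. SUP f\<in>Chi. f w)}.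
           associated \<phi> \<psi> ch FX FY FZ"
proof -
  obtain p0 where p0: "p0 \<in> Phi" using assms(4) by auto
  obtain s0 where s0: "s0 \<in> Psi" using assms(5) by auto
  obtain c0 where c0: "c0 \<in> Chi" using assms(6) by auto
  have A: "\<forall>f\<in>Phi. P1 f (\<lambda>x. FX x * FZ x) FX"
    using assms(7) s0 c0 assoc_iff by blast
  have B: "\<forall>f\<in>Psi. P1 f (\<lambda>y. FY y * FZ y) FY"
    using assms(7) p0 c0 assoc_iff by blast
  have C: "\<forall>f\<in>Chi. Q3 f (\<lambda>y. FY y + FZ y - FY y * FZ y) FY"
    using assms(7) p0 s0 assoc_iff by blast
  note A' = P1_inf_sup[OF assms(4) A] and B' = P1_inf_sup[OF assms(5) B]
    and C' = Q3_inf_sup[OF assms(6) C]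
  show ?thesis
    unfolding assoc_iff using A A' B B' C C' by blast
qed

end
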